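(* Let $\nu>0$, $\tau>0$, $A>0$, $N\ge2$, and let $u^n$ ($n\ge0$) be generated by the CH scheme $u^0=\Pi_Nu_0$, $\frac{u^{n+1}-u^n}{\tau}=-\nu\Delta^2u^{n+1}+A\Delta(u^{n+1}-u^n)+\Delta\Pi_N(f(u^n))$ with $u_0$ of mean zero. Then for every $n\ge0$, with $E_n=E(u^n)$, $$E_{n+1}-E_n+\Big(A+\frac12+\sqrt{\frac{2\nu}{\tau}}\Big)\|u^{n+1}-u^n\|_2^2\le\|u^{n+1}-u^n\|_2^2\Big(\|u^n\|_\infty^2+\frac12\|u^{n+1}\|_\infty^2\Big).$$
   Context: $\mathbb T^2=\mathbb R^2/2\pi\mathbb Z^2$; $f(u)=u^3-u$, $F(u)=\frac14(u^2-1)^2$, $E(u)=\int_{\mathbb T^2}(\frac\nu2|\nabla u|^2+F(u))dx$; $\Pi_N$ is the $L^2$-orthogonal projection onto $X_N=\operatorname{span}\{\cos(k\cdot x),\sin(k\cdot x):|k|\le N\}$. *)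

theory Defs
  imports "HOL-Analysis.Analysis"
begin

text \<open>Functions on the torus R^2/(2 pi Z^2) are represented as functions on R^2 (pairs of reals);
  integrals and norms are taken over the fundamental domain [0,2pi]^2.\<close>

definition T2 :: "(real \<times> real) set" where
  "T2 = cbox (0, 0) (2 * pi, 2 * pi)"

definition fCH :: "real \<Rightarrow> real" where
  "fCH u = u ^ 3 - u"

definition FCH :: "real \<Rightarrow> real" where
  "FCH u = (u\<^sup>2 - 1)\<^sup>2 / 4"

definition freqs :: "nat \<Rightarrow> (int \<times> int) set" where
  "freqs N = {k. (fst k)\<^sup>2 + (snd k)\<^sup>2 \<le> (int N)\<^sup>2}"

definition kdot :: "int \<times> int \<Rightarrow> real \<times> real \<Rightarrow> real" where
  "kdot k x = real_of_int (fst k) * fst x + real_of_int (snd k) * snd x"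

definition XN :: "nat \<Rightarrow> (real \<times> real \<Rightarrow> real) set" where
  "XN N = {p. \<exists>a b :: int \<times> int \<Rightarrow> real.
              p = (\<lambda>x. \<Sum>k\<in>freqs N. a k * cos (kdot k x) + b k * sin (kdot k x))}"

definition PiN :: "nat \<Rightarrow> (real \<times> real \<Rightarrow> real) \<Rightarrow> (real \<times> real \<Rightarrow> real)" where
  "PiN N g = (THE p. p \<in> XN N \<and>
       (\<forall>q\<in>XN N. integral T2 (\<lambda>x. (g x - p x) * q x) = 0))"

definition pd1 :: "(real \<times> real \<Rightarrow> real) \<Rightarrow> real \<times> real \<Rightarrow> real" where
  "pd1 g x = deriv (\<lambda>s. g (s, snd x)) (fst x)"

definition pd2 :: "(real \<times> real \<Rightarrow> real) \<Rightarrow> real \<times> real \<Rightarrow> real" where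
  "pd2 g x = deriv (\<lambda>t. g (fst x, t)) (snd x)"

definition lap :: "(real \<times> real \<Rightarrow> real) \<Rightarrow> real \<times> real \<Rightarrow> real" where
  "lap g = (\<lambda>x. pd1 (pd1 g) x + pd2 (pd2 g) x)"

definition energy :: "real \<Rightarrow> (real \<times> real \<Rightarrow> real) \<Rightarrow> real" where
  "energy \<nu> u = integral T2 (\<lambda>x. \<nu> / 2 * ((pd1 u x)\<^sup>2 + (pd2 u x)\<^sup>2) + FCH (u x))"

definition L2norm :: "(real \<times> real \<Rightarrow> real) \<Rightarrow> real" where
  "L2norm g = sqrt (integral T2 (\<lambda>x. (g x)\<^sup>2))"

definition Linfnorm :: "(real \<times> real \<Rightarrow> real) \<Rightarrow> real" where
  "Linfnorm g = (SUP x\<in>T2. \<bar>g x\<bar>)"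

end

theory Submission
  imports Defs
begin


inductive tp :: "(real \<times> real \<Rightarrow> real) \<Rightarrow> bool" where
  tp_const: "tp (\<lambda>x. c)"
| tp_cos: "tp (\<lambda>x. cos (kdot k x))"
| tp_sin: "tp (\<lambda>x. sin (kdot k x))"
| tp_add: "tp f \<Longrightarrow> tp g \<Longrightarrow> tp (\<lambda>x. f x + g x)"
| tp_mult: "tp f \<Longrightarrow> tp g \<Longrightarrow> tp (\<lambda>x. f x * g x)"

lemma tp_cmult: "tp f \<Longrightarrow> tp (\<lambda>x. c * f x)"
  using tp_mult[OF tp_const] by blast

lemma tp_diff: "tp f \<Longrightarrow> tp g \<Longrightarrow> tp (\<lambda>x. f x - g x)"
proof -
  assume "tp f" "tp g"
  then have "tp (\<lambda>x. f x + (-1) * g x)" by (intro tp_add tp_cmult)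
  then show ?thesis by simp
qed

lemma tp_sum: "(\<And>i. i \<in> I \<Longrightarrow> tp (f i)) \<Longrightarrow> tp (\<lambda>x. \<Sum>i\<in>I. f i x)"
proof (induction I rule: infinite_finite_induct)
  case (infinite A) then show ?case using tp_const[of 0] by simp
next
  case empty then show ?case using tp_const[of 0] by simp
next
  case (insert a A) then show ?case by (simp add: tp_add)
qed

lemma kdot_d1: "((\<lambda>s. kdot k (s, t)) has_real_derivative real_of_int (fst k)) (at s)"
  unfolding kdot_def by (auto intro!: derivative_eq_intros)

lemma kdot_d2: "((\<lambda>t. kdot k (s, t)) has_real_derivative real_of_int (snd k)) (at t)"
  unfolding kdot_def by (auto intro!: derivative_eq_intros)

lemma tp_deriv:
  assumes "tp f"
  shows "\<exists>f1 f2. tp f1 \<and> tp f2 \<and> (\<forall>s t. ((\<lambda>s. f (s, t)) has_real_derivative f1 (s, t)) (at s))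
     \<and> (\<forall>s t. ((\<lambda>t. f (s, t)) has_real_derivative f2 (s, t)) (at t))"
  using assms
proof induction
  case (tp_const c)
  then show ?case by (intro exI[of _ "\<lambda>x. 0"] conjI tp.tp_const) auto
next
  case (tp_cos k)
  show ?case
    apply (rule exI[of _ "\<lambda>x. - real_of_int (fst k) * sin (kdot k x)"],
        rule exI[of _ "\<lambda>x. - real_of_int (snd k) * sin (kdot k x)"], intro conjI tp_cmult tp.tp_sin allI)
    subgoal for s t using DERIV_chain2[OF DERIV_cos kdot_d1[of k t s]] by (simp add: mult.commute)
    subgoal for s t using DERIV_chain2[OF DERIV_cos kdot_d2[of k s t]] by (simp add: mult.commute)
    done
next
  case (tp_sin k)
  show ?case
    apply (rule exI[of _ "\<lambda>x. real_of_int (fst k) * cos (kdot k x)"],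
        rule exI[of _ "\<lambda>x. real_of_int (snd k) * cos (kdot k x)"], intro conjI tp_cmult tp.tp_cos allI)
    subgoal for s t using DERIV_chain2[OF DERIV_sin kdot_d1[of k t s]] by (simp add: mult.commute)
    subgoal for s t using DERIV_chain2[OF DERIV_sin kdot_d2[of k s t]] by (simp add: mult.commute)
    done
next
  case (tp_add f g)
  then obtain f1 f2 g1 g2 where T: "tp f1" "tp f2" "tp g1" "tp g2"
    and d: "\<forall>s t. ((\<lambda>s. f (s, t)) has_real_derivative f1 (s, t)) (at s)"
     "\<forall>s t. ((\<lambda>t. f (s, t)) has_real_derivative f2 (s, t)) (at t)"
     "\<forall>s t. ((\<lambda>s. g (s, t)) has_real_derivative g1 (s, t)) (at s)"
     "\<forall>s t. ((\<lambda>t. g (s, t)) has_real_derivative g2 (s, t)) (at t)" by blast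
  show ?case
    apply (rule exI[of _ "\<lambda>x. f1 x + g1 x"], rule exI[of _ "\<lambda>x. f2 x + g2 x"], intro conjI tp.tp_add allI)
    using d T by (auto intro!: DERIV_add)
next
  case (tp_mult f g)
  then obtain f1 f2 g1 g2 where T: "tp f1" "tp f2" "tp g1" "tp g2"
    and d: "\<forall>s t. ((\<lambda>s. f (s, t)) has_real_derivative f1 (s, t)) (at s)"
     "\<forall>s t. ((\<lambda>t. f (s, t)) has_real_derivative f2 (s, t)) (at t)"
     "\<forall>s t. ((\<lambda>s. g (s, t)) has_real_derivative g1 (s, t)) (at s)"
     "\<forall>s t. ((\<lambda>t. g (s, t)) has_real_derivative g2 (s, t)) (at t)" by blast
  show ?case
    apply (rule exI[of _ "\<lambda>x. f1 x * g x + f x * g1 x"], rule exI[of _ "\<lambda>x. f2 x * g x + f x * g2 x"], intro conjI tp.tp_add tp.tp_mult allI)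
    using T tp_mult.hyps apply simp_all
    subgoal for s t using DERIV_mult[OF d(1)[rule_format, of t s] d(3)[rule_format, of t s]] by (simp add: algebra_simps)
    subgoal for s t using DERIV_mult[OF d(2)[rule_format, of s t] d(4)[rule_format, of s t]] by (simp add: algebra_simps)
    done
qed

lemma tp_pd1: assumes "tp f"
  shows "tp (pd1 f)" "((\<lambda>s. f (s, t)) has_real_derivative pd1 f (s, t)) (at s)"
proof -
  obtain f1 where "tp f1" and d: "\<forall>s t. ((\<lambda>s. f (s, t)) has_real_derivative f1 (s, t)) (at s)"
    using tp_deriv[OF assms] by blast
  have e: "pd1 f = f1"
    by (rule ext) (auto simp: pd1_def intro!: DERIV_imp_deriv d[rule_format])
  show "tp (pd1 f)" using e \<open>tp f1\<close> by simp
  show "((\<lambda>s. f (s, t)) has_real_derivative pd1 f (s, t)) (at s)" using e d by simp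
qed

lemma tp_pd2: assumes "tp f"
  shows "tp (pd2 f)" "((\<lambda>t. f (s, t)) has_real_derivative pd2 f (s, t)) (at t)"
proof -
  obtain f2 where "tp f2" and d: "\<forall>s t. ((\<lambda>t. f (s, t)) has_real_derivative f2 (s, t)) (at t)"
    using tp_deriv[OF assms] by blast
  have e: "pd2 f = f2"
    by (rule ext) (auto simp: pd2_def intro!: DERIV_imp_deriv d[rule_format])
  show "tp (pd2 f)" using e \<open>tp f2\<close> by simp
  show "((\<lambda>t. f (s, t)) has_real_derivative pd2 f (s, t)) (at t)" using e d by simp
qed

lemma tp_lap: "tp f \<Longrightarrow> tp (lap f)"
  unfolding lap_def by (intro tp_add tp_pd1 tp_pd2)

lemma pd1_eqI: "(\<And>s t. ((\<lambda>s. f (s, t)) has_real_derivative g (s, t)) (at s)) \<Longrightarrow> pd1 f = g"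
  by (rule ext) (auto simp: pd1_def intro!: DERIV_imp_deriv)

lemma pd2_eqI: "(\<And>s t. ((\<lambda>t. f (s, t)) has_real_derivative g (s, t)) (at t)) \<Longrightarrow> pd2 f = g"
  by (rule ext) (auto simp: pd2_def intro!: DERIV_imp_deriv)

lemma pd1_add: "tp f \<Longrightarrow> tp g \<Longrightarrow> pd1 (\<lambda>x. f x + g x) = (\<lambda>x. pd1 f x + pd1 g x)"
  by (rule pd1_eqI) (auto intro!: DERIV_add tp_pd1)
lemma pd2_add: "tp f \<Longrightarrow> tp g \<Longrightarrow> pd2 (\<lambda>x. f x + g x) = (\<lambda>x. pd2 f x + pd2 g x)"
  by (rule pd2_eqI) (auto intro!: DERIV_add tp_pd2)
lemma pd1_diff: "tp f \<Longrightarrow> tp g \<Longrightarrow> pd1 (\<lambda>x. f x - g x) = (\<lambda>x. pd1 f x - pd1 g x)"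
  by (rule pd1_eqI) (auto intro!: DERIV_diff tp_pd1)
lemma pd2_diff: "tp f \<Longrightarrow> tp g \<Longrightarrow> pd2 (\<lambda>x. f x - g x) = (\<lambda>x. pd2 f x - pd2 g x)"
  by (rule pd2_eqI) (auto intro!: DERIV_diff tp_pd2)
lemma pd1_cmult: "tp f \<Longrightarrow> pd1 (\<lambda>x. c * f x) = (\<lambda>x. c * pd1 f x)"
  by (rule pd1_eqI) (auto intro!: DERIV_cmult tp_pd1)
lemma pd2_cmult: "tp f \<Longrightarrow> pd2 (\<lambda>x. c * f x) = (\<lambda>x. c * pd2 f x)"
  by (rule pd2_eqI) (auto intro!: DERIV_cmult tp_pd2)
lemma pd1_mult: "tp f \<Longrightarrow> tp g \<Longrightarrow> pd1 (\<lambda>x. f x * g x) = (\<lambda>x. pd1 f x * g x + f x * pd1 g x)"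
  apply (rule pd1_eqI)
  subgoal for s t using DERIV_mult[OF tp_pd1(2)[of f t s] tp_pd1(2)[of g t s]] by (simp add: algebra_simps)
  done
lemma pd2_mult: "tp f \<Longrightarrow> tp g \<Longrightarrow> pd2 (\<lambda>x. f x * g x) = (\<lambda>x. pd2 f x * g x + f x * pd2 g x)"
  apply (rule pd2_eqI)
  subgoal for s t using DERIV_mult[OF tp_pd2(2)[of f s t] tp_pd2(2)[of g s t]] by (simp add: algebra_simps)
  done

lemma lap_add: "tp f \<Longrightarrow> tp g \<Longrightarrow> lap (\<lambda>x. f x + g x) = (\<lambda>x. lap f x + lap g x)"
  by (simp add: lap_def pd1_add pd2_add tp_pd1 tp_pd2 algebra_simps)
lemma lap_diff: "tp f \<Longrightarrow> tp g \<Longrightarrow> lap (\<lambda>x. f x - g x) = (\<lambda>x. lap f x - lap g x)"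
  by (simp add: lap_def pd1_diff pd2_diff tp_pd1 tp_pd2 algebra_simps)
lemma lap_cmult: "tp f \<Longrightarrow> lap (\<lambda>x. c * f x) = (\<lambda>x. c * lap f x)"
  by (simp add: lap_def pd1_cmult pd2_cmult tp_pd1 tp_pd2 algebra_simps)

lemma kdot_cont: "continuous_on S (kdot k)"
  unfolding kdot_def by (intro continuous_intros)

lemma tp_cont: "tp f \<Longrightarrow> continuous_on S f"
proof (induction rule: tp.induct)
  case (tp_cos k) show ?case by (intro continuous_intros kdot_cont)
next
  case (tp_sin k) show ?case by (intro continuous_intros kdot_cont)
qed (auto intro!: continuous_intros)

lemma kdot_shift: "kdot k (s + real_of_int m1 * (2 * pi), t + real_of_int m2 * (2 * pi))
   = kdot k (s, t) + real_of_int (fst k * m1 + snd k * m2) * (2 * pi)"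
  unfolding kdot_def by (simp add: algebra_simps)

lemma cos_per: "cos (y + real_of_int j * (2 * pi)) = cos y"
  using cos.plus_of_int[of y j] by simp
lemma sin_per: "sin (y + real_of_int j * (2 * pi)) = sin y"
  using sin.plus_of_int[of y j] by simp

lemma tp_periodic: "tp f \<Longrightarrow> f (s + real_of_int m1 * (2 * pi), t + real_of_int m2 * (2 * pi)) = f (s, t)"
proof (induction rule: tp.induct)
  case (tp_cos k) show ?case by (simp only: kdot_shift cos_per)
next
  case (tp_sin k) show ?case by (simp only: kdot_shift sin_per)
qed auto

lemma tp_integrable: "tp f \<Longrightarrow> f integrable_on T2"
  unfolding T2_def by (intro integrable_continuous tp_cont)

lemma tp_int_pd2: assumes "tp f" shows "integral T2 (pd2 f) = 0"
proof -
  have c: "continuous_on (cbox (0,0) (2*pi,2*pi)) (pd2 f)" by (intro tp_cont tp_pd2 assms)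
  have inner: "integral (cbox 0 (2*pi)) (\<lambda>t. pd2 f (s, t)) = 0" for s
  proof -
    have "((\<lambda>t. pd2 f (s, t)) has_integral (f (s, 2*pi) - f (s, 0))) {0..2*pi}"
      apply (rule fundamental_theorem_of_calculus[of 0 "2*pi" "\<lambda>t. f (s, t)"])
       apply simp
      using tp_pd2(2)[OF assms] by (auto simp: has_real_derivative_iff_has_vector_derivative[symmetric] intro: has_field_derivative_at_within)
    moreover have "f (s, 2*pi) = f (s, 0)"
      using tp_periodic[OF assms, of s 0 0 1] by simp
    ultimately show ?thesis by (simp add: integral_unique)
  qed
  show ?thesis
    unfolding T2_def integral_prod_continuous[OF c] inner by simp
qed

lemma tp_int_pd1: assumes "tp f" shows "integral T2 (pd1 f) = 0"
proof -
  have c: "continuous_on (cbox (0,0) (2*pi,2*pi)) (pd1 f)" by (intro tp_cont tp_pd1 assms)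
  have c': "continuous_on (cbox (0,0) (2*pi,2*pi)) (\<lambda>(x,y). pd1 f (x, y))"
    using c by (simp add: case_prod_beta')
  have inner: "integral (cbox 0 (2*pi)) (\<lambda>s. pd1 f (s, t)) = 0" for t
  proof -
    have "((\<lambda>s. pd1 f (s, t)) has_integral (f (2*pi, t) - f (0, t))) {0..2*pi}"
      apply (rule fundamental_theorem_of_calculus[of 0 "2*pi" "\<lambda>s. f (s, t)"])
       apply simp
      using tp_pd1(2)[OF assms] by (auto simp: has_real_derivative_iff_has_vector_derivative[symmetric] intro: has_field_derivative_at_within)
    moreover have "f (2*pi, t) = f (0, t)"
      using tp_periodic[OF assms, of 0 1 t 0] by simp
    ultimately show ?thesis by (simp add: integral_unique)
  qed
  show ?thesis
    unfolding T2_def integral_prod_continuous[OF c]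
    using integral_swap_continuous[OF c'] inner by simp
qed

lemma ibp1: assumes "tp f" "tp g"
  shows "integral T2 (\<lambda>x. pd1 f x * g x) = - integral T2 (\<lambda>x. f x * pd1 g x)"
proof -
  have "0 = integral T2 (pd1 (\<lambda>x. f x * g x))"
    using tp_int_pd1[OF tp_mult[OF assms]] by simp
  also have "\<dots> = integral T2 (\<lambda>x. pd1 f x * g x) + integral T2 (\<lambda>x. f x * pd1 g x)"
    unfolding pd1_mult[OF assms]
    by (intro integral_add tp_integrable tp_mult tp_pd1 assms)
  finally show ?thesis by simp
qed

lemma ibp2: assumes "tp f" "tp g"
  shows "integral T2 (\<lambda>x. pd2 f x * g x) = - integral T2 (\<lambda>x. f x * pd2 g x)"
proof -
  have "0 = integral T2 (pd2 (\<lambda>x. f x * g x))"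
    using tp_int_pd2[OF tp_mult[OF assms]] by simp
  also have "\<dots> = integral T2 (\<lambda>x. pd2 f x * g x) + integral T2 (\<lambda>x. f x * pd2 g x)"
    unfolding pd2_mult[OF assms]
    by (intro integral_add tp_integrable tp_mult tp_pd2 assms)
  finally show ?thesis by simp
qed

lemma ibp_lap: assumes "tp f" "tp g"
  shows "integral T2 (\<lambda>x. lap f x * g x) = - integral T2 (\<lambda>x. pd1 f x * pd1 g x + pd2 f x * pd2 g x)"
proof -
  have "integral T2 (\<lambda>x. lap f x * g x) = integral T2 (\<lambda>x. pd1 (pd1 f) x * g x) + integral T2 (\<lambda>x. pd2 (pd2 f) x * g x)"
    unfolding lap_def distrib_right
    by (intro integral_add tp_integrable tp_mult tp_pd1 tp_pd2 assms)
  also have "\<dots> = - integral T2 (\<lambda>x. pd1 f x * pd1 g x) - integral T2 (\<lambda>x. pd2 f x * pd2 g x)"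
    using ibp1[OF tp_pd1(1)[OF assms(1)] assms(2)] ibp2[OF tp_pd2(1)[OF assms(1)] assms(2)] by simp
  also have "\<dots> = - integral T2 (\<lambda>x. pd1 f x * pd1 g x + pd2 f x * pd2 g x)"
    by (subst integral_add) (auto intro!: tp_integrable tp_mult tp_pd1 tp_pd2 assms)
  finally show ?thesis .
qed

lemma cont_int: "continuous_on T2 (f :: real \<times> real \<Rightarrow> real) \<Longrightarrow> f integrable_on T2"
  unfolding T2_def by (rule integrable_continuous)

lemma int_cm: "(f :: 'a::euclidean_space \<Rightarrow> real) integrable_on S \<Longrightarrow> (\<lambda>x. c * f x) integrable_on S"
  using integrable_on_cmult_left[of f S c] by simp

lemma int_comb:
  fixes F :: "real \<times> real \<Rightarrow> real" and \<phi> :: "'j \<Rightarrow> real \<times> real \<Rightarrow> real"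
  assumes "finite J" "\<And>j. j \<in> J \<Longrightarrow> (\<lambda>x. F x * \<phi> j x) integrable_on S"
  shows "(\<lambda>x. F x * (\<Sum>j\<in>J. e j * \<phi> j x)) integrable_on S"
    "integral S (\<lambda>x. F x * (\<Sum>j\<in>J. e j * \<phi> j x)) = (\<Sum>j\<in>J. e j * integral S (\<lambda>x. F x * \<phi> j x))"
proof -
  have eq: "(\<lambda>x. F x * (\<Sum>j\<in>J. e j * \<phi> j x)) = (\<lambda>x. \<Sum>j\<in>J. e j * (F x * \<phi> j x))"
    by (rule ext) (simp add: sum_distrib_left mult.left_commute)
  show "(\<lambda>x. F x * (\<Sum>j\<in>J. e j * \<phi> j x)) integrable_on S"
    unfolding eq using assms by (intro integrable_sum int_cm) auto
  show "integral S (\<lambda>x. F x * (\<Sum>j\<in>J. e j * \<phi> j x)) = (\<Sum>j\<in>J. e j * integral S (\<lambda>x. F x * \<phi> j x))"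
    unfolding eq using assms by (subst integral_sum) (auto simp: int_cm)
qed

lemma proj_exists:
  fixes \<phi> :: "'j \<Rightarrow> real \<times> real \<Rightarrow> real"
  assumes cont: "\<And>j. continuous_on T2 (\<phi> j)" and fin: "finite J"
  shows "\<forall>g. (\<forall>j\<in>J. (\<lambda>x. g x * \<phi> j x) integrable_on T2) \<longrightarrow>
     (\<exists>c. \<forall>i\<in>J. integral T2 (\<lambda>x. (g x - (\<Sum>j\<in>J. c j * \<phi> j x)) * \<phi> i x) = 0)"
  using fin
proof (induction J rule: finite_induct)
  case empty then show ?case by simp
next
  case (insert j0 J)
  show ?case
  proof (intro allI impI)
    fix g assume gi: "\<forall>j\<in>insert j0 J. (\<lambda>x. g x * \<phi> j x) integrable_on T2"
    have cint: "(\<lambda>x. h x * \<phi> j x) integrable_on T2" if "continuous_on T2 h" for h j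
      by (intro cont_int continuous_intros cont that)
    obtain c where c: "\<forall>i\<in>J. integral T2 (\<lambda>x. (g x - (\<Sum>j\<in>J. c j * \<phi> j x)) * \<phi> i x) = 0"
      using insert.IH gi by auto
    obtain d where d: "\<forall>i\<in>J. integral T2 (\<lambda>x. (\<phi> j0 x - (\<Sum>j\<in>J. d j * \<phi> j x)) * \<phi> i x) = 0"
      using insert.IH cint[OF cont] by blast
    define p where "p x = (\<Sum>j\<in>J. c j * \<phi> j x)" for x
    define \<psi> where "\<psi> x = \<phi> j0 x - (\<Sum>j\<in>J. d j * \<phi> j x)" for x
    have pc: "continuous_on T2 p" unfolding p_def by (intro continuous_intros cont)
    have \<psi>c: "continuous_on T2 \<psi>" unfolding \<psi>_def by (intro continuous_intros cont)
    have o1: "\<And>i. i \<in> J \<Longrightarrow> integral T2 (\<lambda>x. (g x - p x) * \<phi> i x) = 0" using c by (simp add: p_def)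
    have o2: "\<And>i. i \<in> J \<Longrightarrow> integral T2 (\<lambda>x. \<psi> x * \<phi> i x) = 0" using d by (simp add: \<psi>_def)
    have Gi: "(\<lambda>x. (g x - p x - a * \<psi> x) * \<phi> j x) integrable_on T2" if "j \<in> insert j0 J" for a j
    proof -
      have "(\<lambda>x. g x * \<phi> j x) integrable_on T2" using gi that by auto
      moreover have "(\<lambda>x. (p x + a * \<psi> x) * \<phi> j x) integrable_on T2"
        by (intro cint continuous_intros pc \<psi>c)
      ultimately have "(\<lambda>x. g x * \<phi> j x - (p x + a * \<psi> x) * \<phi> j x) integrable_on T2"
        by (rule integrable_diff)
      then show ?thesis by (simp add: algebra_simps)
    qed
    have Gint: "integral T2 (\<lambda>x. (g x - p x - a * \<psi> x) * \<phi> i x) = 0" if "i \<in> J" for a i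
    proof -
      have "integral T2 (\<lambda>x. (g x - p x - a * \<psi> x) * \<phi> i x)
          = integral T2 (\<lambda>x. (g x - p x) * \<phi> i x - a * (\<psi> x * \<phi> i x))"
        by (simp add: algebra_simps)
      also have "\<dots> = integral T2 (\<lambda>x. (g x - p x) * \<phi> i x) - a * integral T2 (\<lambda>x. \<psi> x * \<phi> i x)"
        using Gi[of i 0] that by (subst integral_diff) (auto intro!: int_cm cint \<psi>c)
      finally show ?thesis using o1 o2 that by simp
    qed
    have Gpsi: "integral T2 (\<lambda>x. (g x - p x - a * \<psi> x) * \<phi> j0 x)
        = integral T2 (\<lambda>x. (g x - p x - a * \<psi> x) * \<psi> x)" for a
    proof -
      have e: "\<phi> j0 x = \<psi> x + (\<Sum>j\<in>J. d j * \<phi> j x)" for x by (simp add: \<psi>_def)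
      have i1: "\<And>j. j \<in> J \<Longrightarrow> (\<lambda>x. (g x - p x - a * \<psi> x) * \<phi> j x) integrable_on T2"
        using Gi by auto
      have "(\<lambda>x. (g x - p x - a * \<psi> x) * \<psi> x) integrable_on T2"
      proof -
        have "(\<lambda>x. (g x - p x - a * \<psi> x) * \<phi> j0 x - (g x - p x - a * \<psi> x) * (\<Sum>j\<in>J. d j * \<phi> j x)) integrable_on T2"
          using Gi[of j0 a] int_comb(1)[OF insert.hyps(1) i1] by (intro integrable_diff) auto
        then show ?thesis unfolding e by (simp add: algebra_simps)
      qed
      then have "integral T2 (\<lambda>x. (g x - p x - a * \<psi> x) * \<phi> j0 x)
        = integral T2 (\<lambda>x. (g x - p x - a * \<psi> x) * \<psi> x) + integral T2 (\<lambda>x. (g x - p x - a * \<psi> x) * (\<Sum>j\<in>J. d j * \<phi> j x))"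
        unfolding e distrib_left
        using int_comb(1)[OF insert.hyps(1) i1] by (intro integral_add) auto
      also have "integral T2 (\<lambda>x. (g x - p x - a * \<psi> x) * (\<Sum>j\<in>J. d j * \<phi> j x)) = 0"
        using int_comb(2)[OF insert.hyps(1) i1] Gint by simp
      finally show ?thesis by simp
    qed
    define Q where "Q = integral T2 (\<lambda>x. \<psi> x * \<psi> x)"
    define R where "R = integral T2 (\<lambda>x. (g x - p x) * \<psi> x)"
    show "\<exists>c. \<forall>i\<in>insert j0 J. integral T2 (\<lambda>x. (g x - (\<Sum>j\<in>insert j0 J. c j * \<phi> j x)) * \<phi> i x) = 0"
    proof (cases "Q = 0")
      case True
      have z: "\<psi> x = 0" if "x \<in> T2" for x
      proof -
        have hi: "((\<lambda>x. \<psi> x * \<psi> x) has_integral 0) T2"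
          using True unfolding Q_def
          by (metis cont_int continuous_on_mult \<psi>c has_integral_integral)
        have "(\<lambda>x. \<psi> x * \<psi> x) x = 0"
          using hi apply -
          apply (rule has_integral_0_cbox_imp_0[of "(0,0)" "(2*pi, 2*pi)"])
          using \<psi>c that True unfolding T2_def Q_def
          by (auto intro!: continuous_intros simp: has_integral_integral[symmetric] integrable_continuous
              box_ne_empty Basis_prod_def)
        then show ?thesis by simp
      qed
      let ?c = "c(j0 := 0)"
      have sumeq: "(\<Sum>j\<in>insert j0 J. ?c j * \<phi> j x) = p x" for x
        using insert.hyps by (auto simp: p_def intro!: sum.cong)
      show ?thesis
      proof (intro exI[of _ ?c] ballI)
        fix i assume i: "i \<in> insert j0 J"
        show "integral T2 (\<lambda>x. (g x - (\<Sum>j\<in>insert j0 J. ?c j * \<phi> j x)) * \<phi> i x) = 0"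
        proof (cases "i = j0")
          case False then show ?thesis using i Gint[of i 0] unfolding sumeq by simp
        next
          case True
          have "integral T2 (\<lambda>x. (g x - p x) * \<phi> j0 x) = integral T2 (\<lambda>x. (g x - p x - 0 * \<psi> x) * \<psi> x)"
            using Gpsi[of 0] by simp
          also have "\<dots> = integral T2 (\<lambda>x. 0)" by (rule integral_cong) (simp add: z)
          finally show ?thesis using True unfolding sumeq by simp
        qed
      qed
    next
      case False
      define a where "a = R / Q"
      let ?c = "(\<lambda>j. c j - a * d j)(j0 := a)"
      have sumeq: "(\<Sum>j\<in>insert j0 J. ?c j * \<phi> j x) = p x + a * \<psi> x" for x
      proof -
        have "(\<Sum>j\<in>insert j0 J. ?c j * \<phi> j x) = a * \<phi> j0 x + (\<Sum>j\<in>J. (c j - a * d j) * \<phi> j x)"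
          using insert.hyps by (auto intro!: sum.cong)
        also have "\<dots> = p x + a * \<psi> x"
          by (simp add: p_def \<psi>_def left_diff_distrib sum_subtractf sum_distrib_left algebra_simps)
        finally show ?thesis .
      qed
      show ?thesis
      proof (intro exI[of _ ?c] ballI)
        fix i assume i: "i \<in> insert j0 J"
        have eqf: "(\<lambda>x. (g x - (\<Sum>j\<in>insert j0 J. ?c j * \<phi> j x)) * \<phi> i x) = (\<lambda>x. (g x - p x - a * \<psi> x) * \<phi> i x)"
          unfolding sumeq by (simp add: algebra_simps)
        show "integral T2 (\<lambda>x. (g x - (\<Sum>j\<in>insert j0 J. ?c j * \<phi> j x)) * \<phi> i x) = 0"
        proof (cases "i = j0")
          case False then show ?thesis using i Gint[of i a] eqf by simp
        next
          case True
          have Ri: "(\<lambda>x. (g x - p x) * \<psi> x) integrable_on T2"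
          proof -
            have h: "(\<lambda>x. (g x - p x - 0 * \<psi> x) * \<psi> x) integrable_on T2"
            proof -
              have e: "\<phi> j0 x = \<psi> x + (\<Sum>j\<in>J. d j * \<phi> j x)" for x by (simp add: \<psi>_def)
              have i1: "\<And>j. j \<in> J \<Longrightarrow> (\<lambda>x. (g x - p x - 0 * \<psi> x) * \<phi> j x) integrable_on T2"
                using Gi[of _ 0] by blast
              have "(\<lambda>x. (g x - p x - 0 * \<psi> x) * \<phi> j0 x - (g x - p x - 0 * \<psi> x) * (\<Sum>j\<in>J. d j * \<phi> j x)) integrable_on T2"
                using Gi[of j0 0] int_comb(1)[OF insert.hyps(1) i1] by (intro integrable_diff) auto
              then show ?thesis unfolding e by (simp add: algebra_simps)
            qed
            then show ?thesis by simp
          qed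
          have "integral T2 (\<lambda>x. (g x - p x - a * \<psi> x) * \<psi> x)
              = integral T2 (\<lambda>x. (g x - p x) * \<psi> x - a * (\<psi> x * \<psi> x))"
            by (simp add: algebra_simps)
          also have "\<dots> = R - a * Q" unfolding R_def Q_def
            using Ri by (subst integral_diff) (auto intro!: int_cm cont_int continuous_intros \<psi>c)
          also have "\<dots> = 0" using False by (simp add: a_def)
          finally show ?thesis using True eqf Gpsi[of a] by simp
        qed
      qed
    qed
  qed
qed

lemma finite_freqs: "finite (freqs N)"
proof -
  have "freqs N \<subseteq> {-int N..int N} \<times> {-int N..int N}"
  proof
    fix k assume "k \<in> freqs N"
    then have h: "(fst k)\<^sup>2 + (snd k)\<^sup>2 \<le> (int N)\<^sup>2" by (simp add: freqs_def)
    have "(fst k)\<^sup>2 \<le> (int N)\<^sup>2" "(snd k)\<^sup>2 \<le> (int N)\<^sup>2" using h by (auto intro: order_trans[OF _ h])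
    then have "\<bar>fst k\<bar> \<le> int N" "\<bar>snd k\<bar> \<le> int N"
      using abs_le_square_iff by (metis abs_of_nat)+
    then show "k \<in> {-int N..int N} \<times> {-int N..int N}" by (cases k) auto
  qed
  then show ?thesis by (rule finite_subset) auto
qed

definition phi :: "(int \<times> int) \<times> bool \<Rightarrow> real \<times> real \<Rightarrow> real" where
  "phi j x = (if snd j then cos (kdot (fst j) x) else sin (kdot (fst j) x))"

lemma phi_tp: "tp (phi j)"
  unfolding phi_def by (cases "snd j") (auto intro: tp_cos tp_sin)

lemma sum_phi: "(\<Sum>j\<in>freqs N \<times> UNIV. c j * phi j x)
   = (\<Sum>k\<in>freqs N. c (k, True) * cos (kdot k x) + c (k, False) * sin (kdot k x))"
proof -
  have "(\<Sum>j\<in>freqs N \<times> UNIV. c j * phi j x) = (\<Sum>k\<in>freqs N. \<Sum>b\<in>UNIV. c (k, b) * phi (k, b) x)"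
    unfolding sum.cartesian_product by (simp add: case_prod_unfold)
  also have "\<dots> = (\<Sum>k\<in>freqs N. c (k, True) * cos (kdot k x) + c (k, False) * sin (kdot k x))"
    by (simp add: UNIV_bool phi_def add.commute)
  finally show ?thesis .
qed

lemma XN_alt: "p \<in> XN N \<longleftrightarrow> (\<exists>c. p = (\<lambda>x. \<Sum>j\<in>freqs N \<times> UNIV. c j * phi j x))"
proof
  assume "p \<in> XN N"
  then obtain a b where p: "p = (\<lambda>x. \<Sum>k\<in>freqs N. a k * cos (kdot k x) + b k * sin (kdot k x))"
    by (auto simp: XN_def)
  show "\<exists>c. p = (\<lambda>x. \<Sum>j\<in>freqs N \<times> UNIV. c j * phi j x)"
    by (rule exI[of _ "\<lambda>j. if snd j then a (fst j) else b (fst j)"]) (simp add: sum_phi p)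
next
  assume "\<exists>c. p = (\<lambda>x. \<Sum>j\<in>freqs N \<times> UNIV. c j * phi j x)"
  then obtain c where "p = (\<lambda>x. \<Sum>j\<in>freqs N \<times> UNIV. c j * phi j x)" by blast
  then have pe: "p = (\<lambda>x. \<Sum>k\<in>freqs N. c (k, True) * cos (kdot k x) + c (k, False) * sin (kdot k x))"
    unfolding sum_phi by simp
  show "p \<in> XN N" unfolding XN_def mem_Collect_eq
    apply (rule exI[of _ "\<lambda>k. c (k, True)"])
    apply (rule exI[of _ "\<lambda>k. c (k, False)"])
    by (rule pe)
qed

lemma XN_tp: "p \<in> XN N \<Longrightarrow> tp p"
  unfolding XN_alt by (auto intro!: tp_sum tp_cmult phi_tp)

lemma XN_diff: "p \<in> XN N \<Longrightarrow> q \<in> XN N \<Longrightarrow> (\<lambda>x. p x - q x) \<in> XN N"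
proof -
  assume "p \<in> XN N" "q \<in> XN N"
  then obtain c d where "p = (\<lambda>x. \<Sum>j\<in>freqs N \<times> UNIV. c j * phi j x)" "q = (\<lambda>x. \<Sum>j\<in>freqs N \<times> UNIV. d j * phi j x)"
    unfolding XN_alt by blast
  then show ?thesis unfolding XN_alt
    by (intro exI[of _ "\<lambda>j. c j - d j"]) (simp add: left_diff_distrib sum_subtractf)
qed

lemma tp_zero_T2: assumes "tp h" "\<And>x. x \<in> T2 \<Longrightarrow> h x = 0" shows "h y = 0"
proof -
  obtain s t where y: "y = (s, t)" by (cases y)
  define m1 where "m1 = \<lfloor>s / (2*pi)\<rfloor>"
  define m2 where "m2 = \<lfloor>t / (2*pi)\<rfloor>"
  have fl: "0 \<le> z - real_of_int \<lfloor>z / (2*pi)\<rfloor> * (2*pi) \<and> z - real_of_int \<lfloor>z / (2*pi)\<rfloor> * (2*pi) \<le> 2*pi" for z :: real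
  proof -
    have p: "0 < 2*pi" by simp
    have "real_of_int \<lfloor>z / (2*pi)\<rfloor> \<le> z / (2*pi)" "z / (2*pi) < real_of_int \<lfloor>z / (2*pi)\<rfloor> + 1"
      by linarith+
    then have "real_of_int \<lfloor>z / (2*pi)\<rfloor> * (2*pi) \<le> z / (2*pi) * (2*pi)" "z / (2*pi) * (2*pi) < (real_of_int \<lfloor>z / (2*pi)\<rfloor> + 1) * (2*pi)"
      using p by (intro mult_right_mono mult_strict_right_mono; simp)+
    then have "real_of_int \<lfloor>z / (2*pi)\<rfloor> * (2*pi) \<le> z" "z < (real_of_int \<lfloor>z / (2*pi)\<rfloor> + 1) * (2*pi)"
      by simp_all
    then show ?thesis by (simp add: algebra_simps)
  qed
  have "h (s, t) = h ((s - real_of_int m1 * (2*pi)) + real_of_int m1 * (2*pi), (t - real_of_int m2 * (2*pi)) + real_of_int m2 * (2*pi))"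
    by simp
  also have "\<dots> = h (s - real_of_int m1 * (2*pi), t - real_of_int m2 * (2*pi))"
    by (rule tp_periodic[OF assms(1)])
  also have "\<dots> = 0"
    using fl[of s] fl[of t] by (intro assms(2)) (simp add: T2_def m1_def m2_def)
  finally show ?thesis using y by simp
qed

lemma PiN_props:
  assumes gi: "\<And>q. continuous_on T2 q \<Longrightarrow> (\<lambda>x. g x * q x) integrable_on T2"
  shows "PiN N g \<in> XN N" "\<And>q. q \<in> XN N \<Longrightarrow> integral T2 (\<lambda>x. (g x - PiN N g x) * q x) = 0"
proof -
  have phic: "continuous_on T2 (phi j)" for j by (rule tp_cont[OF phi_tp])
  have fin: "finite (freqs N \<times> (UNIV :: bool set))" using finite_freqs by simp
  define P where "P p \<longleftrightarrow> p \<in> XN N \<and> (\<forall>q\<in>XN N. integral T2 (\<lambda>x. (g x - p x) * q x) = 0)" for p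
  have orth: "\<forall>q\<in>XN N. integral T2 (\<lambda>x. (g x - p x) * q x) = 0"
    if pX: "p \<in> XN N" and o: "\<forall>j\<in>freqs N \<times> UNIV. integral T2 (\<lambda>x. (g x - p x) * phi j x) = 0" for p
  proof
    fix q assume "q \<in> XN N"
    then obtain e where q: "q = (\<lambda>x. \<Sum>j\<in>freqs N \<times> UNIV. e j * phi j x)" by (auto simp: XN_alt)
    have ii: "(\<lambda>x. (g x - p x) * phi j x) integrable_on T2" for j
    proof -
      have "(\<lambda>x. p x * phi j x) integrable_on T2"
        using tp_cont[OF XN_tp[OF pX]] phic by (intro cont_int continuous_intros) auto
      then have "(\<lambda>x. g x * phi j x - p x * phi j x) integrable_on T2"
        using gi[OF phic] by (intro integrable_diff) auto
      then show ?thesis by (simp add: algebra_simps)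
    qed
    show "integral T2 (\<lambda>x. (g x - p x) * q x) = 0"
      unfolding q int_comb(2)[OF fin ii] using o by (intro sum.neutral) auto
  qed
  obtain c where c: "\<forall>i\<in>freqs N \<times> UNIV. integral T2 (\<lambda>x. (g x - (\<Sum>j\<in>freqs N \<times> UNIV. c j * phi j x)) * phi i x) = 0"
    using proj_exists[of phi "freqs N \<times> UNIV", OF phic fin] gi[OF phic] by blast
  define p0 where "p0 = (\<lambda>x. \<Sum>j\<in>freqs N \<times> UNIV. c j * phi j x)"
  have p0X: "p0 \<in> XN N" unfolding p0_def XN_alt by blast
  have c0: "\<forall>j\<in>freqs N \<times> UNIV. integral T2 (\<lambda>x. (g x - p0 x) * phi j x) = 0"
    using c by (simp only: p0_def)
  have Pp0: "P p0" unfolding P_def using p0X orth[OF p0X c0] by blast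
  have uniq: "p = p0" if "P p" for p
  proof -
    have pX: "p \<in> XN N" and op: "\<forall>q\<in>XN N. integral T2 (\<lambda>x. (g x - p x) * q x) = 0" using that by (auto simp: P_def)
    have o0: "\<forall>q\<in>XN N. integral T2 (\<lambda>x. (g x - p0 x) * q x) = 0" using Pp0 by (auto simp: P_def)
    define h where "h x = p x - p0 x" for x
    have hX: "h \<in> XN N" unfolding h_def by (intro XN_diff pX p0X)
    have htp: "tp h" by (rule XN_tp[OF hX])
    have gh: "(\<lambda>x. g x * h x) integrable_on T2" by (intro gi tp_cont htp)
    have i1: "(\<lambda>x. (g x - p x) * h x) integrable_on T2"
    proof -
      have "(\<lambda>x. p x * h x) integrable_on T2"
        using tp_cont[OF XN_tp[OF pX]] tp_cont[OF htp] by (intro cont_int continuous_intros) auto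
      then have "(\<lambda>x. g x * h x - p x * h x) integrable_on T2"
        using gh by (intro integrable_diff) auto
      then show ?thesis by (simp add: algebra_simps)
    qed
    have i2: "(\<lambda>x. (g x - p0 x) * h x) integrable_on T2"
    proof -
      have "(\<lambda>x. p0 x * h x) integrable_on T2"
        using tp_cont[OF XN_tp[OF p0X]] tp_cont[OF htp] by (intro cont_int continuous_intros) auto
      then have "(\<lambda>x. g x * h x - p0 x * h x) integrable_on T2"
        using gh by (intro integrable_diff) auto
      then show ?thesis by (simp add: algebra_simps)
    qed
    have "integral T2 (\<lambda>x. h x * h x) = integral T2 (\<lambda>x. (g x - p0 x) * h x - (g x - p x) * h x)"
      by (rule integral_cong) (simp add: h_def algebra_simps)
    also have "\<dots> = 0" using integral_diff[OF i2 i1] op o0 hX by simp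
    finally have hi: "((\<lambda>x. h x * h x) has_integral 0) T2"
      by (metis cont_int continuous_on_mult tp_cont[OF htp] has_integral_integral)
    have "h x = 0" if "x \<in> T2" for x
    proof -
      have "(\<lambda>x. h x * h x) x = 0"
        using hi that apply -
        apply (rule has_integral_0_cbox_imp_0[of "(0,0)" "(2*pi, 2*pi)"])
        unfolding T2_def
        by (auto intro!: continuous_intros tp_cont[OF htp] simp: box_ne_empty Basis_prod_def)
      then show ?thesis by simp
    qed
    then have "h y = 0" for y by (rule tp_zero_T2[OF htp])
    then show "p = p0" by (auto simp: h_def)
  qed
  have "PiN N g = (THE p. P p)" unfolding PiN_def P_def by (rule refl)
  also have "\<dots> = p0" by (rule the_equality[of P p0, OF Pp0 uniq])
  finally have "PiN N g = p0" .
  then show "PiN N g \<in> XN N" "\<And>q. q \<in> XN N \<Longrightarrow> integral T2 (\<lambda>x. (g x - PiN N g x) * q x) = 0"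
    using Pp0 by (auto simp: P_def)
qed




lemma F_ineq: "FCH b - FCH a \<le> fCH a * (b - a) + (b - a)\<^sup>2 * (a\<^sup>2 + b\<^sup>2 / 2 - 1/2)"
proof -
  have e1: "4 * (FCH b - FCH a - fCH a * (b - a)) = (b - a)\<^sup>2 * (4 * a\<^sup>2 + 2 * b\<^sup>2 - 2) - (b - a)\<^sup>2 * (a - b)\<^sup>2"
  proof -
    have e: "4 * FCH u = (u\<^sup>2 - 1)\<^sup>2" for u by (simp add: FCH_def)
    show ?thesis by (simp only: right_diff_distrib e) (simp add: fCH_def power2_eq_square power3_eq_cube algebra_simps)
  qed
  have e2: "0 \<le> (b - a)\<^sup>2 * (a - b)\<^sup>2" by simp
  have e3: "4 * ((b - a)\<^sup>2 * (a\<^sup>2 + b\<^sup>2 / 2 - 1/2)) = (b - a)\<^sup>2 * (4 * a\<^sup>2 + 2 * b\<^sup>2 - 2)"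
    by (simp add: algebra_simps)
  have "4 * (FCH b - FCH a - fCH a * (b - a)) \<le> 4 * ((b - a)\<^sup>2 * (a\<^sup>2 + b\<^sup>2 / 2 - 1/2))"
    unfolding e1 e3 using e2 by linarith
  then have "FCH b - FCH a - fCH a * (b - a) \<le> (b - a)\<^sup>2 * (a\<^sup>2 + b\<^sup>2 / 2 - 1/2)"
    by (subst (asm) mult_le_cancel_left_pos) auto
  then show ?thesis by (simp only: diff_le_eq add.commute)
qed

lemma amgm_pt:
  fixes \<nu> \<tau> d g :: real assumes "\<nu> > 0" "\<tau> > 0"
  shows "0 \<le> \<nu>/2 * d\<^sup>2 + \<tau> * g\<^sup>2 + sqrt (2 * \<nu> / \<tau>) * \<tau> * (g * d)"
proof -
  define r where "r = sqrt (2 * \<nu> / \<tau>) * \<tau>"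
  have rr: "r * r = 2 * \<nu> * \<tau>"
  proof -
    have "r * r = (sqrt (2 * \<nu> / \<tau>))\<^sup>2 * \<tau> * \<tau>" unfolding r_def power2_eq_square by (simp only: ac_simps)
    also have "(sqrt (2 * \<nu> / \<tau>))\<^sup>2 = 2 * \<nu> / \<tau>" using assms by (intro real_sqrt_pow2) simp
    also have "2 * \<nu> / \<tau> * \<tau> * \<tau> = 2 * \<nu> * \<tau>" using assms by simp
    finally show ?thesis .
  qed
  have "\<nu>/2 * (\<nu>/2 * d\<^sup>2 + \<tau> * g\<^sup>2 + r * (g * d)) = (\<nu>/2 * d + r/2 * g)\<^sup>2 + (2 * \<nu> * \<tau> - r * r) / 4 * g\<^sup>2"
    by (simp add: power2_eq_square field_simps)
  then have "\<nu>/2 * (\<nu>/2 * d\<^sup>2 + \<tau> * g\<^sup>2 + r * (g * d)) = (\<nu>/2 * d + r/2 * g)\<^sup>2"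
    by (simp add: rr)
  then have "0 \<le> \<nu>/2 * (\<nu>/2 * d\<^sup>2 + \<tau> * g\<^sup>2 + r * (g * d))" by simp
  then show ?thesis using assms by (simp add: r_def zero_le_mult_iff)
qed

lemma Linf_bound: assumes "tp h" "x \<in> T2" shows "(h x)\<^sup>2 \<le> (Linfnorm h)\<^sup>2"
proof -
  have c: "continuous_on T2 (\<lambda>x. \<bar>h x\<bar>)" by (intro continuous_intros tp_cont assms(1))
  have "compact ((\<lambda>x. \<bar>h x\<bar>) ` T2)" unfolding T2_def
    by (rule compact_continuous_image) (use c in \<open>auto simp: T2_def\<close>)
  then have "bdd_above ((\<lambda>x. \<bar>h x\<bar>) ` T2)" by (intro bounded_imp_bdd_above compact_imp_bounded)
  then have "\<bar>h x\<bar> \<le> Linfnorm h" unfolding Linfnorm_def using assms(2) by (rule cSUP_upper2) simp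
  then show ?thesis by (metis abs_ge_zero power2_abs power_mono)
qed

lemma u0_int:
  fixes u0 q :: "real \<times> real \<Rightarrow> real"
  assumes "u0 absolutely_integrable_on T2" "continuous_on T2 q"
  shows "(\<lambda>x. u0 x * q x) integrable_on T2"
proof -
  have "(\<lambda>x. q x * u0 x) absolutely_integrable_on T2"
  proof (rule absolutely_integrable_bounded_measurable_product[where h="(*)", OF bilinear_times])
    show T: "T2 \<in> sets lebesgue" unfolding T2_def by (intro fmeasurableD lmeasurable_cbox)
    show "q \<in> borel_measurable (lebesgue_on T2)" by (intro continuous_imp_measurable_on_sets_lebesgue assms T)
    show "bounded (q ` T2)" unfolding T2_def
      by (intro compact_imp_bounded compact_continuous_image) (use assms in \<open>auto simp: T2_def\<close>)
  qed (rule assms)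
  then show ?thesis by (simp add: set_lebesgue_integral_eq_integral(1) mult.commute)
qed


lemma tp_fCH: "tp h \<Longrightarrow> tp (\<lambda>x. fCH (h x))"
proof -
  assume "tp h"
  moreover have "(\<lambda>x. fCH (h x)) = (\<lambda>x. h x * (h x * h x) - h x)" by (simp add: fCH_def power3_eq_cube mult.assoc)
  ultimately show ?thesis by (simp add: tp_diff tp_mult)
qed

lemma tp_FCH: "tp h \<Longrightarrow> tp (\<lambda>x. FCH (h x))"
proof -
  assume h: "tp h"
  have "(\<lambda>x. FCH (h x)) = (\<lambda>x. (1/4) * ((h x * h x - 1) * (h x * h x - 1)))" by (simp add: FCH_def power2_eq_square)
  moreover have "tp (\<lambda>x. (1/4) * ((h x * h x - 1) * (h x * h x - 1)))"
    using h by (intro tp_cmult tp_mult tp_diff tp_const)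
  ultimately show ?thesis by simp
qed

lemma tp_sq: "tp h \<Longrightarrow> tp (\<lambda>x. (h x)\<^sup>2)"
  by (simp add: power2_eq_square tp_mult)

lemma int_lin2: assumes "f integrable_on S" "g integrable_on S"
  shows "integral S (\<lambda>x. c * f x + d * g x) = c * integral S f + d * integral S (g :: 'n::euclidean_space \<Rightarrow> real)"
  using assms by (simp add: integral_add int_cm integral_mult_right)

lemma int_lin3: assumes "f integrable_on S" "g integrable_on S" "h integrable_on S"
  shows "integral S (\<lambda>x. c * f x + d * g x + e * h x) = c * integral S f + d * integral S g + e * integral S (h :: 'n::euclidean_space \<Rightarrow> real)"
  using assms by (simp add: integral_add int_cm integral_mult_right integrable_add)

lemma int_lin4: assumes "f integrable_on S" "g integrable_on S" "h integrable_on S" "k integrable_on S"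
  shows "integral S (\<lambda>x. c * f x + d * g x + e * h x + w * k x) = c * integral S f + d * integral S g + e * integral S h + w * integral S (k :: 'n::euclidean_space \<Rightarrow> real)"
  using assms by (simp add: integral_add int_cm integral_mult_right integrable_add)

theorem lemma2p2:
  fixes \<nu> \<tau> A :: real and N :: nat
    and u0 :: "real \<times> real \<Rightarrow> real"
    and u :: "nat \<Rightarrow> real \<times> real \<Rightarrow> real"
  assumes "\<nu> > 0" and "\<tau> > 0" and "A > 0" and "N \<ge> 2"
    and "u0 absolutely_integrable_on T2"
    and "(\<lambda>x. (u0 x)\<^sup>2) integrable_on T2"
    and "integral T2 u0 = 0"
    and "u 0 = PiN N u0"
    and "\<And>n. u (Suc n) \<in> XN N"
    and "\<And>n x. (u (Suc n) x - u n x) / \<tau> =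
            - \<nu> * lap (lap (u (Suc n))) x
            + A * lap (\<lambda>y. u (Suc n) y - u n y) x
            + lap (PiN N (\<lambda>y. fCH (u n y))) x"
  shows "energy \<nu> (u (Suc n)) - energy \<nu> (u n)
           + (A + 1/2 + sqrt (2 * \<nu> / \<tau>)) * (L2norm (\<lambda>x. u (Suc n) x - u n x))\<^sup>2
         \<le> (L2norm (\<lambda>x. u (Suc n) x - u n x))\<^sup>2
           * ((Linfnorm (u n))\<^sup>2 + 1/2 * (Linfnorm (u (Suc n)))\<^sup>2)"
proof -
  have nu: "\<nu> > 0" and tau: "\<tau> > 0" using assms by auto
  have uX: "u m \<in> XN N" for m
  proof (cases m)
    case 0
    have "PiN N u0 \<in> XN N" by (rule PiN_props(1)) (rule u0_int[OF assms(5)])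
    then show ?thesis using 0 assms(8) by simp
  next
    case (Suc k) then show ?thesis using assms(9) by simp
  qed
  have utp: "tp (u m)" for m by (rule XN_tp[OF uX])
  define a where "a = u n"
  define b where "b = u (Suc n)"
  define \<delta> where "\<delta> = (\<lambda>x. b x - a x)"
  define P where "P = PiN N (\<lambda>y. fCH (a y))"
  have atp: "tp a" and btp: "tp b" using utp by (simp_all add: a_def b_def)
  have dtp: "tp \<delta>" unfolding \<delta>_def by (intro tp_diff atp btp)
  have dX: "\<delta> \<in> XN N" unfolding \<delta>_def a_def b_def by (intro XN_diff uX)
  have fa_int: "(\<lambda>x. fCH (a x) * q x) integrable_on T2" if "continuous_on T2 q" for q
    by (intro cont_int continuous_intros that tp_cont tp_fCH atp)
  have PX: "P \<in> XN N" unfolding P_def by (rule PiN_props(1)) (rule fa_int)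
  have Porth: "integral T2 (\<lambda>x. (fCH (a x) - P x) * \<delta> x) = 0"
    unfolding P_def by (rule PiN_props(2)[OF fa_int dX])
  have Ptp: "tp P" by (rule XN_tp[OF PX])
  define g where "g = (\<lambda>x. (-\<nu>) * lap b x + A * \<delta> x + P x)"
  have gtp: "tp g" unfolding g_def by (intro tp_add tp_cmult tp_lap btp dtp Ptp)
  have lapg: "lap g = (\<lambda>x. (-\<nu>) * lap (lap b) x + A * lap \<delta> x + lap P x)"
  proof -
    have "lap g = (\<lambda>x. lap (\<lambda>x. (-\<nu>) * lap b x + A * \<delta> x) x + lap P x)"
      unfolding g_def by (rule lap_add) (intro tp_add tp_cmult tp_lap btp dtp, rule Ptp)
    also have "lap (\<lambda>x. (-\<nu>) * lap b x + A * \<delta> x) = (\<lambda>x. lap (\<lambda>x. (-\<nu>) * lap b x) x + lap (\<lambda>x. A * \<delta> x) x)"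
      by (rule lap_add) (intro tp_cmult tp_lap btp dtp)+
    also have "lap (\<lambda>x. (-\<nu>) * lap b x) = (\<lambda>x. (-\<nu>) * lap (lap b) x)" by (rule lap_cmult) (intro tp_lap btp)
    also have "lap (\<lambda>x. A * \<delta> x) = (\<lambda>x. A * lap \<delta> x)" by (rule lap_cmult[OF dtp])
    finally show ?thesis .
  qed
  have eqn: "\<delta> x = \<tau> * lap g x" for x
  proof -
    have "\<delta> x / \<tau> = lap g x" using assms(10)[of n x] unfolding lapg \<delta>_def a_def b_def P_def by simp
    then show ?thesis using tau by (simp add: field_simps)
  qed
  note TI = tp_integrable tp_add tp_mult tp_cmult tp_diff tp_pd1 tp_pd2 tp_lap tp_fCH tp_FCH tp_sq atp btp dtp gtp Ptp
  define ID where "ID = integral T2 (\<lambda>x. pd1 \<delta> x * pd1 \<delta> x + pd2 \<delta> x * pd2 \<delta> x)"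
  define IG where "IG = integral T2 (\<lambda>x. pd1 g x * pd1 g x + pd2 g x * pd2 g x)"
  define IGD where "IGD = integral T2 (\<lambda>x. pd1 g x * pd1 \<delta> x + pd2 g x * pd2 \<delta> x)"
  define IB where "IB = integral T2 (\<lambda>x. pd1 b x * pd1 \<delta> x + pd2 b x * pd2 \<delta> x)"
  define IF where "IF = integral T2 (\<lambda>x. fCH (a x) * \<delta> x)"
  define IS where "IS = integral T2 (\<lambda>x. \<delta> x * \<delta> x)"
  define IP where "IP = integral T2 (\<lambda>x. P x * \<delta> x)"
  define Idg where "Idg = integral T2 (\<lambda>x. \<delta> x * g x)"
  have s1: "Idg = - \<tau> * IG"
  proof -
    have "Idg = integral T2 (\<lambda>x. \<tau> * (lap g x * g x))" unfolding Idg_def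
      by (rule integral_cong) (simp add: eqn[of x for x])
    also have "\<dots> = \<tau> * integral T2 (\<lambda>x. lap g x * g x)" by (rule integral_mult_right)
    also have "\<dots> = - \<tau> * IG" unfolding IG_def ibp_lap[OF gtp gtp] by simp
    finally show ?thesis .
  qed
  have s2: "Idg = \<nu> * IB + A * IS + IP"
  proof -
    have "Idg = integral T2 (\<lambda>x. (-\<nu>) * (lap b x * \<delta> x) + A * (\<delta> x * \<delta> x) + 1 * (P x * \<delta> x))"
      unfolding Idg_def g_def by (rule integral_cong) (simp add: algebra_simps)
    also have "\<dots> = (-\<nu>) * integral T2 (\<lambda>x. lap b x * \<delta> x) + A * IS + 1 * IP"
      unfolding IS_def IP_def by (rule int_lin3) (intro TI)+
    also have "integral T2 (\<lambda>x. lap b x * \<delta> x) = - IB" unfolding IB_def by (rule ibp_lap[OF btp dtp])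
    finally show ?thesis by simp
  qed
  have s3: "IP = IF"
  proof -
    have "0 = integral T2 (\<lambda>x. fCH (a x) * \<delta> x - P x * \<delta> x)"
      using Porth by (simp add: algebra_simps)
    also have "\<dots> = IF - IP" unfolding IF_def IP_def by (rule integral_diff) (intro TI)+
    finally show ?thesis by simp
  qed
  have s4: "IS = - \<tau> * IGD"
  proof -
    have "IS = integral T2 (\<lambda>x. \<tau> * (lap g x * \<delta> x))" unfolding IS_def
      by (rule integral_cong) (simp add: eqn[of x for x] mult.assoc)
    also have "\<dots> = \<tau> * integral T2 (\<lambda>x. lap g x * \<delta> x)" by (rule integral_mult_right)
    also have "\<dots> = - \<tau> * IGD" unfolding IGD_def ibp_lap[OF gtp dtp] by simp
    finally show ?thesis .
  qed
  define s where "s = sqrt (2 * \<nu> / \<tau>)"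
  have s5: "0 \<le> \<nu>/2 * ID + \<tau> * IG + (s * \<tau>) * IGD"
  proof -
    have "0 \<le> integral T2 (\<lambda>x. \<nu>/2 * (pd1 \<delta> x * pd1 \<delta> x + pd2 \<delta> x * pd2 \<delta> x) + \<tau> * (pd1 g x * pd1 g x + pd2 g x * pd2 g x)
          + (s * \<tau>) * (pd1 g x * pd1 \<delta> x + pd2 g x * pd2 \<delta> x))"
    proof (rule integral_nonneg)
      show "(\<lambda>x. \<nu>/2 * (pd1 \<delta> x * pd1 \<delta> x + pd2 \<delta> x * pd2 \<delta> x) + \<tau> * (pd1 g x * pd1 g x + pd2 g x * pd2 g x)
          + (s * \<tau>) * (pd1 g x * pd1 \<delta> x + pd2 g x * pd2 \<delta> x)) integrable_on T2" by (intro TI)+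
      fix x
      have "0 \<le> \<nu>/2 * (pd1 \<delta> x)\<^sup>2 + \<tau> * (pd1 g x)\<^sup>2 + s * \<tau> * (pd1 g x * pd1 \<delta> x)"
        unfolding s_def by (rule amgm_pt[OF nu tau])
      moreover have "0 \<le> \<nu>/2 * (pd2 \<delta> x)\<^sup>2 + \<tau> * (pd2 g x)\<^sup>2 + s * \<tau> * (pd2 g x * pd2 \<delta> x)"
        unfolding s_def by (rule amgm_pt[OF nu tau])
      ultimately show "0 \<le> \<nu>/2 * (pd1 \<delta> x * pd1 \<delta> x + pd2 \<delta> x * pd2 \<delta> x) + \<tau> * (pd1 g x * pd1 g x + pd2 g x * pd2 g x)
          + (s * \<tau>) * (pd1 g x * pd1 \<delta> x + pd2 g x * pd2 \<delta> x)"
        by (simp add: power2_eq_square algebra_simps)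
    qed
    also have "\<dots> = \<nu>/2 * ID + \<tau> * IG + (s * \<tau>) * IGD"
      unfolding ID_def IG_def IGD_def by (rule int_lin3) (intro TI)+
    finally show ?thesis .
  qed
  define La where "La = Linfnorm a"
  define Lb where "Lb = Linfnorm b"
  define M where "M = La\<^sup>2 + Lb\<^sup>2 / 2 - 1/2"
  have pd1d: "pd1 \<delta> x = pd1 b x - pd1 a x" for x unfolding \<delta>_def pd1_diff[OF btp atp] by simp
  have pd2d: "pd2 \<delta> x = pd2 b x - pd2 a x" for x unfolding \<delta>_def pd2_diff[OF btp atp] by simp
  have s6: "energy \<nu> b - energy \<nu> a \<le> \<nu> * IB + (-\<nu>/2) * ID + 1 * IF + M * IS"
  proof -
    have "energy \<nu> b - energy \<nu> a = integral T2 (\<lambda>x. (\<nu> / 2 * ((pd1 b x)\<^sup>2 + (pd2 b x)\<^sup>2) + FCH (b x))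
          - (\<nu> / 2 * ((pd1 a x)\<^sup>2 + (pd2 a x)\<^sup>2) + FCH (a x)))"
      unfolding energy_def by (rule integral_diff[symmetric]) (intro TI)+
    also have "\<dots> \<le> integral T2 (\<lambda>x. \<nu> * (pd1 b x * pd1 \<delta> x + pd2 b x * pd2 \<delta> x) + (-\<nu>/2) * (pd1 \<delta> x * pd1 \<delta> x + pd2 \<delta> x * pd2 \<delta> x)
          + 1 * (fCH (a x) * \<delta> x) + M * (\<delta> x * \<delta> x))"
    proof (rule integral_le)
      show "(\<lambda>x. (\<nu> / 2 * ((pd1 b x)\<^sup>2 + (pd2 b x)\<^sup>2) + FCH (b x))
          - (\<nu> / 2 * ((pd1 a x)\<^sup>2 + (pd2 a x)\<^sup>2) + FCH (a x))) integrable_on T2" by (intro TI)+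
      show "(\<lambda>x. \<nu> * (pd1 b x * pd1 \<delta> x + pd2 b x * pd2 \<delta> x) + (-\<nu>/2) * (pd1 \<delta> x * pd1 \<delta> x + pd2 \<delta> x * pd2 \<delta> x)
          + 1 * (fCH (a x) * \<delta> x) + M * (\<delta> x * \<delta> x)) integrable_on T2" by (intro TI)+
      fix x assume x: "x \<in> T2"
      have g1: "\<nu> / 2 * ((pd1 b x)\<^sup>2 + (pd2 b x)\<^sup>2) - \<nu> / 2 * ((pd1 a x)\<^sup>2 + (pd2 a x)\<^sup>2)
          = \<nu> * (pd1 b x * pd1 \<delta> x + pd2 b x * pd2 \<delta> x) + (-\<nu>/2) * (pd1 \<delta> x * pd1 \<delta> x + pd2 \<delta> x * pd2 \<delta> x)"
        by (simp add: pd1d pd2d power2_eq_square algebra_simps)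
      have Fi: "FCH (b x) - FCH (a x) \<le> fCH (a x) * \<delta> x + (\<delta> x)\<^sup>2 * ((a x)\<^sup>2 + (b x)\<^sup>2 / 2 - 1/2)"
        using F_ineq[of "b x" "a x"] by (simp add: \<delta>_def)
      have "(a x)\<^sup>2 + (b x)\<^sup>2 / 2 - 1/2 \<le> M"
        using Linf_bound[OF atp x] Linf_bound[OF btp x] by (simp add: M_def La_def Lb_def)
      then have "(\<delta> x)\<^sup>2 * ((a x)\<^sup>2 + (b x)\<^sup>2 / 2 - 1/2) \<le> (\<delta> x)\<^sup>2 * M"
        by (intro mult_left_mono) simp_all
      then have Fi2: "FCH (b x) - FCH (a x) \<le> 1 * (fCH (a x) * \<delta> x) + M * (\<delta> x * \<delta> x)"
        using Fi by (simp add: power2_eq_square mult.commute)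
      show "(\<nu> / 2 * ((pd1 b x)\<^sup>2 + (pd2 b x)\<^sup>2) + FCH (b x)) - (\<nu> / 2 * ((pd1 a x)\<^sup>2 + (pd2 a x)\<^sup>2) + FCH (a x))
          \<le> \<nu> * (pd1 b x * pd1 \<delta> x + pd2 b x * pd2 \<delta> x) + (-\<nu>/2) * (pd1 \<delta> x * pd1 \<delta> x + pd2 \<delta> x * pd2 \<delta> x)
          + 1 * (fCH (a x) * \<delta> x) + M * (\<delta> x * \<delta> x)"
        using g1 Fi2 by linarith
    qed
    also have "\<dots> = \<nu> * IB + (-\<nu>/2) * ID + 1 * IF + M * IS"
      unfolding IB_def ID_def IF_def IS_def by (rule int_lin4) (intro TI)+
    finally show ?thesis .
  qed
  have ISnn: "0 \<le> IS" unfolding IS_def by (rule integral_nonneg) (intro TI, simp)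
  have L2: "(L2norm (\<lambda>x. u (Suc n) x - u n x))\<^sup>2 = IS"
    unfolding L2norm_def IS_def \<delta>_def a_def b_def using ISnn
    by (simp add: IS_def \<delta>_def a_def b_def power2_eq_square)
  have sIS: "(s * \<tau>) * IGD = - s * IS" using s4 by simp
  have main: "energy \<nu> b - energy \<nu> a + (A + 1/2 + s) * IS \<le> IS * (La\<^sup>2 + 1/2 * Lb\<^sup>2)"
  proof -
    have "energy \<nu> b - energy \<nu> a \<le> - A * IS - s * IS + M * IS"
      using s1 s2 s3 s5 s6 sIS by linarith
    then show ?thesis by (simp add: M_def algebra_simps)
  qed
  show ?thesis using main unfolding L2 s_def La_def Lb_def a_def b_def .
qed


end
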